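(* There is no element of $\mathcal{D}'$ strictly between $\sqrt3$ and $\frac{7+\sqrt{13}}{6}$.
   Context: For an infinite word $w$ with infinitely many palindromic prefixes (the empty word counting as one), let $(n_i)_{i\ge1}$ be the increasing sequence of their lengths and $\delta(w)=\limsup n_{i+1}/n_i$. Characteristic Sturmian word: for positive integers $s_1,s_2,\dots$ and letters $a\ne b$, let $\sigma_0=a$, $\sigma_1=a^{s_1-1}b$, $\sigma_n=\sigma_{n-1}^{s_n}\sigma_{n-2}$ ($n\ge2$); the limit of the $\sigma_n$ is the characteristic Sturmian word of slope $[0;s_1,s_2,\dots]$. $\mathcal{D}'$ is the set of values $\delta(w)$ where $w$ is either a periodic word with a palindromic period (i.e. $w=uuu\cdots$ with $u$ a nonempty palindrome) or a characteristic Sturmian word. *)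

theory Defs
  imports Complex_Main "HOL-Library.Infinite_Set" "HOL-Library.Liminf_Limsup"
    "HOL-Library.Extended_Real"
begin

text \<open>Infinite words are functions nat => 'a (letter i is w i, i >= 0).
  The prefix of length n is palindromic iff w i = w (n-1-i) for all i < n;
  the empty prefix (n = 0) counts as palindromic.\<close>

definition pal_prefix :: "(nat \<Rightarrow> 'a) \<Rightarrow> nat \<Rightarrow> bool" where
  "pal_prefix w n \<longleftrightarrow> (\<forall>i<n. w i = w (n - 1 - i))"

definition pal_lengths :: "(nat \<Rightarrow> 'a) \<Rightarrow> nat set" where
  "pal_lengths w = {n. pal_prefix w n}"

text \<open>delta(w) = limsup n_(i+1)/n_i, where (n_i) enumerates the palindromic
  prefix lengths increasingly (enumerate is 0-indexed).\<close>

definition delta :: "(nat \<Rightarrow> 'a) \<Rightarrow> ereal" where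
  "delta w = limsup (\<lambda>i. ereal (real (enumerate (pal_lengths w) (Suc i))
                                / real (enumerate (pal_lengths w) i)))"

definition periodic_pal :: "(nat \<Rightarrow> 'a) \<Rightarrow> bool" where
  "periodic_pal w \<longleftrightarrow> (\<exists>u. u \<noteq> [] \<and> rev u = u \<and> (\<forall>i. w i = u ! (i mod length u)))"

text \<open>Standard sequence sigma_n for directive sequence s_1, s_2, ... (s 0 unused).\<close>

fun sigma :: "(nat \<Rightarrow> nat) \<Rightarrow> 'a \<Rightarrow> 'a \<Rightarrow> nat \<Rightarrow> 'a list" where
  "sigma s a b 0 = [a]"
| "sigma s a b (Suc 0) = replicate (s 1 - 1) a @ [b]"
| "sigma s a b (Suc (Suc n)) =
     concat (replicate (s (Suc (Suc n))) (sigma s a b (Suc n))) @ sigma s a b n"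

text \<open>w is the characteristic Sturmian word of slope [0; s_1, s_2, ...]: the limit
  of the sigma_n, i.e. every sigma_n (n >= 1) is a prefix of w.\<close>

definition char_sturmian :: "(nat \<Rightarrow> 'a) \<Rightarrow> bool" where
  "char_sturmian w \<longleftrightarrow>
     (\<exists>s a b. a \<noteq> b \<and> (\<forall>k\<ge>1. s k > 0) \<and>
        (\<forall>n\<ge>1. \<forall>i<length (sigma s a b n). w i = sigma s a b n ! i))"

definition Dprime :: "ereal set" where
  "Dprime = {delta w | w :: nat \<Rightarrow> nat.
               infinite (pal_lengths w) \<and> (periodic_pal w \<or> char_sturmian w)}"

end

theory Submission
  imports Defs
begin

lemma enum_next_le:
  fixes S :: "nat set"
  assumes "infinite S" "y \<in> S" "enumerate S i < y"
  shows "enumerate S (Suc i) \<le> y"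
  using assms by (simp add: enumerate_Suc'' Least_le)

lemma enum_next_eq:
  fixes S :: "nat set"
  assumes inf: "infinite S" and n: "enumerate S i = n" and n': "n' \<in> S" "n < n'"
    and gap: "\<forall>x\<in>S. \<not> (n < x \<and> x < n')"
  shows "enumerate S (Suc i) = n'"
proof -
  have "enumerate S (Suc i) \<le> n'" using enum_next_le[OF inf n'(1)] n n' by simp
  moreover have "enumerate S (Suc i) \<in> S" using enumerate_in_set[OF inf] .
  moreover have "n < enumerate S (Suc i)" using enumerate_step[OF inf, of i] n by simp
  ultimately show ?thesis using gap by force
qed

lemma delta_upper:
  fixes S :: "nat set" and B :: real
  assumes inf: "infinite S"
    and H: "\<forall>e>0. \<exists>N. \<forall>n\<in>S. n \<ge> N \<longrightarrow> (\<exists>y\<in>S. n < y \<and> real y \<le> (B + e) * real n)"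
  shows "limsup (\<lambda>i. ereal (real (enumerate S (Suc i)) / real (enumerate S i))) \<le> ereal B"
proof (rule ereal_le_epsilon2)
  fix e :: real assume e: "0 < e"
  obtain N where N: "\<forall>n\<in>S. n \<ge> N \<longrightarrow> (\<exists>y\<in>S. n < y \<and> real y \<le> (B + e) * real n)"
    using H e by blast
  have ev: "eventually (\<lambda>i. ereal (real (enumerate S (Suc i)) / real (enumerate S i)) \<le> ereal (B + e)) sequentially"
    unfolding eventually_sequentially
  proof (intro exI allI impI)
    fix i assume "N \<le> i"
    then have "N \<le> enumerate S i" using le_enumerate[OF inf, of i] by linarith
    then obtain y where y: "y \<in> S" "enumerate S i < y" "real y \<le> (B + e) * real (enumerate S i)"
      using N enumerate_in_set[OF inf] by blast
    have le: "enumerate S (Suc i) \<le> y" using enum_next_le[OF inf y(1,2)] .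
    have pos: "0 < enumerate S i"
    proof (rule ccontr)
      assume "\<not> 0 < enumerate S i"
      then have "enumerate S i = 0" by simp
      then show False using y by simp
    qed
    have "real (enumerate S (Suc i)) / real (enumerate S i) \<le> real y / real (enumerate S i)"
      using le pos by (simp add: divide_right_mono)
    also have "\<dots> \<le> B + e" using y(3) pos by (simp add: divide_le_eq)
    finally show "ereal (real (enumerate S (Suc i)) / real (enumerate S i)) \<le> ereal (B + e)" by simp
  qed
  have "limsup (\<lambda>i. ereal (real (enumerate S (Suc i)) / real (enumerate S i))) \<le> ereal (B + e)"
    by (rule Limsup_bounded[OF ev])
  then show "limsup (\<lambda>i. ereal (real (enumerate S (Suc i)) / real (enumerate S i))) \<le> ereal B + ereal e"
    by simp
qed

lemma delta_lower:
  fixes S :: "nat set" and B :: real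
  assumes inf: "infinite S"
    and H: "\<forall>N. \<exists>n n'. n \<in> S \<and> n' \<in> S \<and> N \<le> n \<and> 0 < n \<and> n < n' \<and>
              (\<forall>x\<in>S. \<not> (n < x \<and> x < n')) \<and> B * real n \<le> real n'"
  shows "ereal B \<le> limsup (\<lambda>i. ereal (real (enumerate S (Suc i)) / real (enumerate S i)))"
proof (rule ccontr)
  let ?R = "\<lambda>i. ereal (real (enumerate S (Suc i)) / real (enumerate S i))"
  assume "\<not> ereal B \<le> limsup ?R"
  then have "limsup ?R < ereal B" by simp
  then have "eventually (\<lambda>i. ?R i < ereal B) sequentially" by (rule Limsup_lessD)
  then obtain N0 where N0: "\<And>i. i \<ge> N0 \<Longrightarrow> ?R i < ereal B" unfolding eventually_sequentially by blast
  obtain n n' where nn: "n \<in> S" "n' \<in> S" "Suc (enumerate S N0) \<le> n" "0 < n" "n < n'"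
    "\<forall>x\<in>S. \<not> (n < x \<and> x < n')" "B * real n \<le> real n'"
    using H by blast
  obtain i where i: "enumerate S i = n" using enumerate_Ex[OF inf nn(1)] by blast
  have "enumerate S N0 < enumerate S i" using i nn(3) by simp
  then have "N0 < i" using inf by simp
  have "enumerate S (Suc i) = n'" using enum_next_eq[OF inf i nn(2) nn(5) nn(6)] .
  then have "?R i = ereal (real n' / real n)" using i by simp
  moreover have "B \<le> real n' / real n" using nn(4,7) by (simp add: le_divide_eq)
  ultimately have "ereal B \<le> ?R i" by simp
  with N0[of i] \<open>N0 < i\<close> show False by simp
qed

lemma pal_shift:
  assumes p1: "pal_prefix w P" and p2: "pal_prefix w (P + d)" and d: "0 < d" "d \<le> P"
  shows "pal_prefix w (P - d) \<and> w (P - d) = w P"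
proof -
  have P1: "\<And>j. j < P \<Longrightarrow> w j = w (P - 1 - j)" using p1 unfolding pal_prefix_def by blast
  have P2: "\<And>j. j < P + d \<Longrightarrow> w j = w (P + d - 1 - j)" using p2 unfolding pal_prefix_def by blast
  have per: "w i = w (i - d)" if "d \<le> i" "i < P + d" for i
  proof -
    have "w i = w (P + d - 1 - i)" using P2 that(2) .
    also have "\<dots> = w (P - 1 - (P + d - 1 - i))"
    proof -
      have "P + d - 1 - i < P" using that d by linarith
      then show ?thesis using P1 by blast
    qed
    also have "P - 1 - (P + d - 1 - i) = i - d" using that d by linarith
    finally show ?thesis .
  qed
  have "pal_prefix w (P - d)" unfolding pal_prefix_def
  proof (intro allI impI)
    fix i assume i: "i < P - d"
    have "w i = w (P - 1 - i)" using i by (intro P1) linarith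
    also have "\<dots> = w (P - 1 - i - d)" using i by (intro per) linarith+
    also have "P - 1 - i - d = P - d - 1 - i" by simp
    finally show "w i = w (P - d - 1 - i)" .
  qed
  moreover have "w P = w (P - d)" using d by (intro per) linarith+
  ultimately show ?thesis by simp
qed

definition goodp :: "(nat \<Rightarrow> 'a) \<Rightarrow> nat set \<Rightarrow> nat \<Rightarrow> nat \<Rightarrow> bool" where
  "goodp w C P P' \<longleftrightarrow> P < P' \<and> P' \<le> 2 * P + 1 \<and>
     (\<forall>Q\<in>C. 2 * P < Q + P' \<longrightarrow> Q < P \<longrightarrow> w Q \<noteq> w P)"

lemma pal_char:
  fixes w :: "nat \<Rightarrow> 'a" and C :: "nat set"
  assumes CS: "C \<subseteq> pal_lengths w" and C0: "0 \<in> C"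
    and good: "\<forall>P\<in>C. \<exists>P'\<in>C. goodp w C P P'"
  shows "pal_lengths w = C \<and>
    (\<forall>P P' N. P \<in> C \<longrightarrow> goodp w C P P' \<longrightarrow> P < N \<longrightarrow> N < P' \<longrightarrow> N \<notin> pal_lengths w)"
proof -
  have main: "N \<in> pal_lengths w \<longrightarrow> N \<in> C \<and>
     (\<forall>P P'. P \<in> C \<longrightarrow> goodp w C P P' \<longrightarrow> P < N \<longrightarrow> N < P' \<longrightarrow> False)" for N
  proof (induction N rule: less_induct)
    case (less N)
    show ?case
    proof (intro impI)
      assume NS: "N \<in> pal_lengths w"
      have gap: "False" if P: "P \<in> C" "goodp w C P P'" "P < N" "N < P'" for P P'
      proof -
        define d where "d = N - P"
        have d: "0 < d" "d \<le> P" "N = P + d" using P unfolding d_def goodp_def by auto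
        have "pal_prefix w P" using CS P(1) unfolding pal_lengths_def by auto
        moreover have "pal_prefix w (P + d)" using NS d(3) unfolding pal_lengths_def by auto
        ultimately have sh: "pal_prefix w (P - d) \<and> w (P - d) = w P"
          using pal_shift d by blast
        have "P - d < N" using d by simp
        then have "P - d \<in> C" using less.IH sh unfolding pal_lengths_def by blast
        moreover have "2 * P < (P - d) + P'" "P - d < P" using d P(4) by auto
        ultimately show False using P(2) sh unfolding goodp_def by blast
      qed
      define M where "M = Max {x\<in>C. x \<le> N}"
      have fin: "finite {x\<in>C. x \<le> N}" by simp
      have ne: "{x\<in>C. x \<le> N} \<noteq> {}" using C0 by auto
      have M: "M \<in> C" "M \<le> N" using Max_in[OF fin ne] unfolding M_def by auto
      obtain P' where P': "P' \<in> C" "goodp w C M P'" using good M(1) by blast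
      have "N \<in> C"
      proof (cases "M = N")
        case True then show ?thesis using M by simp
      next
        case False
        then have "M < N" using M by simp
        show ?thesis
        proof (cases "N < P'")
          case True then show ?thesis using gap[OF M(1) P'(2) \<open>M < N\<close>] by simp
        next
          case False
          then have "P' \<le> M" using P' fin unfolding M_def by (auto intro!: Max_ge)
          then show ?thesis using P'(2) unfolding goodp_def by simp
        qed
      qed
      then show "N \<in> C \<and> (\<forall>P P'. P \<in> C \<longrightarrow> goodp w C P P' \<longrightarrow> P < N \<longrightarrow> N < P' \<longrightarrow> False)"
        using gap by blast
    qed
  qed
  show ?thesis
  proof
    show "pal_lengths w = C" using main CS by blast
    show "\<forall>P P' N. P \<in> C \<longrightarrow> goodp w C P P' \<longrightarrow> P < N \<longrightarrow> N < P' \<longrightarrow> N \<notin> pal_lengths w"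
      using main by blast
  qed
qed

abbreviation pw :: "'a list \<Rightarrow> nat \<Rightarrow> 'a list" where
  "pw x k \<equiv> concat (replicate k x)"

fun pis :: "(nat \<Rightarrow> nat) \<Rightarrow> 'a \<Rightarrow> 'a \<Rightarrow> nat \<Rightarrow> 'a list" where
  "pis s a b 0 = []"
| "pis s a b (Suc 0) = replicate (s 1 - 1) a"
| "pis s a b (Suc (Suc n)) =
     concat (replicate (s (Suc (Suc n))) (sigma s a b (Suc n))) @ pis s a b (Suc n)"

definition alph :: "'a \<Rightarrow> 'a \<Rightarrow> nat \<Rightarrow> 'a" where
  "alph a b n = (if odd n then b else a)"

lemma pw_comm: "x @ pw x k = pw x k @ x"
  by (induction k) auto

lemma rev_pw: "rev (pw x k) = pw (rev x) k"
  by (induction k) (auto simp: pw_comm)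

lemma pw_pal_shift:
  assumes "x @ p = p @ rev x"
  shows "pw x k @ p = p @ pw (rev x) k"
proof (induction k)
  case 0 then show ?case by simp
next
  case (Suc k)
  have "pw x (Suc k) @ p = x @ (pw x k @ p)" by simp
  also have "\<dots> = (x @ p) @ pw (rev x) k" using Suc by simp
  also have "\<dots> = p @ (rev x @ pw (rev x) k)" using assms by simp
  finally show ?case by simp
qed

lemma inv_step:
  assumes p: "rev p = p" and xp: "rev (x @ p) = x @ p" and yp: "rev (y @ p) = y @ p"
    and xy: "x @ y = p @ [\<alpha>, \<beta>]" and yx: "y @ x = p @ [\<beta>, \<alpha>]"
  shows "rev (pw x k @ p) = pw x k @ p \<and>
         rev ((pw x k @ y) @ (pw x k @ p)) = (pw x k @ y) @ (pw x k @ p) \<and>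
         rev (x @ (pw x k @ p)) = x @ (pw x k @ p) \<and>
         (pw x k @ y) @ x = (pw x k @ p) @ [\<beta>, \<alpha>] \<and>
         x @ (pw x k @ y) = (pw x k @ p) @ [\<alpha>, \<beta>]"
proof -
  have L1: "x @ p = p @ rev x" using xp p by (metis rev_append)
  have L1y: "y @ p = p @ rev y" using yp p by (metis rev_append)
  have L2: "pw x j @ p = p @ pw (rev x) j" for j using pw_pal_shift[OF L1] .
  have A: "rev (pw x j @ p) = pw x j @ p" for j
    using L2[of j] p by (simp add: rev_pw)
  have B: "rev ((pw x k @ y) @ (pw x k @ p)) = (pw x k @ y) @ (pw x k @ p)"
  proof -
    have e: "(pw x k @ y) @ (pw x k @ p) = pw x k @ p @ rev y @ pw (rev x) k"
      using L2[of k] L1y by (metis append.assoc)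
    show ?thesis unfolding e using p L1y by (simp add: rev_pw)
  qed
  have C: "rev (x @ (pw x k @ p)) = x @ (pw x k @ p)"
    using A[of "Suc k"] by simp
  have D: "(pw x k @ y) @ x = (pw x k @ p) @ [\<beta>, \<alpha>]" using yx by simp
  have E: "x @ (pw x k @ y) = (pw x k @ p) @ [\<alpha>, \<beta>]"
  proof -
    have "x @ (pw x k @ y) = pw x k @ (x @ y)" by (metis append.assoc pw_comm)
    then show ?thesis using xy by simp
  qed
  show ?thesis using A B C D E by blast
qed

lemma sig_inv:
  "rev (pis s a b (Suc n)) = pis s a b (Suc n) \<and>
   rev (sigma s a b (Suc n) @ pis s a b (Suc n)) = sigma s a b (Suc n) @ pis s a b (Suc n) \<and>
   rev (sigma s a b n @ pis s a b (Suc n)) = sigma s a b n @ pis s a b (Suc n) \<and>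
   sigma s a b (Suc n) @ sigma s a b n = pis s a b (Suc n) @ [alph a b (Suc n), alph a b n] \<and>
   sigma s a b n @ sigma s a b (Suc n) = pis s a b (Suc n) @ [alph a b n, alph a b (Suc n)]"
proof (induction n)
  case 0
  have r: "a # replicate k a = replicate k a @ [a]" for k by (simp add: replicate_append_same)
  show ?case by (simp add: alph_def r)
next
  case (Suc n)
  have an: "alph a b (Suc (Suc n)) = alph a b n" by (simp add: alph_def)
  show ?case
    using inv_step[of "pis s a b (Suc n)" "sigma s a b (Suc n)" "sigma s a b n"
        "alph a b (Suc n)" "alph a b n" "s (Suc (Suc n))"] Suc.IH
    by (simp only: sigma.simps pis.simps an)
qed

definition qq :: "(nat \<Rightarrow> nat) \<Rightarrow> 'a \<Rightarrow> 'a \<Rightarrow> nat \<Rightarrow> nat" where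
  "qq s a b m = length (sigma s a b m)"
definition pp :: "(nat \<Rightarrow> nat) \<Rightarrow> 'a \<Rightarrow> 'a \<Rightarrow> nat \<Rightarrow> nat" where
  "pp s a b m = length (pis s a b m)"
definition lam :: "(nat \<Rightarrow> nat) \<Rightarrow> 'a \<Rightarrow> 'a \<Rightarrow> nat \<Rightarrow> nat \<Rightarrow> nat" where
  "lam s a b n j = j * qq s a b (Suc n) + pp s a b (Suc n)"

lemma len_pw: "length (pw x k) = k * length x"
  by (induction k) auto

lemma qq0: "qq s a b 0 = 1" by (simp add: qq_def)
lemma qq1: "s 1 > 0 \<Longrightarrow> qq s a b (Suc 0) = s 1" by (simp add: qq_def)
lemma qq2: "qq s a b (Suc (Suc n)) = s (Suc (Suc n)) * qq s a b (Suc n) + qq s a b n"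
  by (simp add: qq_def len_pw)
lemma pp2: "pp s a b (Suc (Suc n)) = s (Suc (Suc n)) * qq s a b (Suc n) + pp s a b (Suc n)"
  by (simp add: qq_def pp_def len_pw)
lemma pp_qq: "pp s a b (Suc n) + 2 = qq s a b (Suc n) + qq s a b n"
proof -
  have "length (sigma s a b (Suc n) @ sigma s a b n) = length (pis s a b (Suc n) @ [alph a b (Suc n), alph a b n])"
    using sig_inv[of s a b n] by metis
  then show ?thesis by (simp add: qq_def pp_def)
qed

lemma lam_len: "length (pw (sigma s a b (Suc n)) j @ pis s a b (Suc n)) = lam s a b n j"
  by (simp add: lam_def len_pw qq_def pp_def)

context
  fixes s :: "nat \<Rightarrow> nat" and a b :: 'a
  assumes hs: "\<forall>k\<ge>1. s k > 0"
begin

lemma s_pos: "k \<ge> 1 \<Longrightarrow> s k > 0" using hs by blast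

lemma qq_pos: "qq s a b m \<ge> 1"
proof (induction m rule: less_induct)
  case (less m)
  show ?case
  proof (cases m)
    case 0 then show ?thesis by (simp add: qq0)
  next
    case (Suc k)
    show ?thesis
    proof (cases k)
      case 0 then show ?thesis using Suc s_pos[of 1] by (simp add: qq1)
    next
      case (Suc k')
      then show ?thesis using \<open>m = Suc k\<close> less.IH[of k'] by (simp add: qq2)
    qed
  qed
qed

lemma qq_mono1: "qq s a b m \<le> qq s a b (Suc m)"
proof (cases m)
  case 0 then show ?thesis using s_pos[of 1] by (simp add: qq0 qq1)
next
  case (Suc k)
  have "s (Suc (Suc k)) \<ge> 1" using s_pos[of "Suc (Suc k)"] by simp
  then have le: "qq s a b (Suc k) \<le> s (Suc (Suc k)) * qq s a b (Suc k)" by simp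
  show ?thesis unfolding Suc qq2 using le by linarith
qed

lemma qq_mono: "m \<le> m' \<Longrightarrow> qq s a b m \<le> qq s a b m'"
  using qq_mono1 by (rule lift_Suc_mono_le)

lemma qq_ge: "m \<le> qq s a b m"
proof (induction m rule: less_induct)
  case (less m)
  show ?case
  proof (cases m)
    case 0 then show ?thesis by simp
  next
    case (Suc k)
    show ?thesis
    proof (cases k)
      case 0 then show ?thesis using Suc qq_pos[of 1] by simp
    next
      case (Suc k')
      have "s (Suc (Suc k')) \<ge> 1" using s_pos[of "Suc (Suc k')"] by simp
      then have le: "qq s a b (Suc k') \<le> s (Suc (Suc k')) * qq s a b (Suc k')" by simp
      have "Suc k' \<le> qq s a b (Suc k')" using less.IH[of "Suc k'"] \<open>m = Suc k\<close> Suc by simp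
      then show ?thesis unfolding \<open>m = Suc k\<close> Suc qq2 using le qq_pos[of k'] by linarith
    qed
  qed
qed

lemma pp_mono1: "pp s a b (Suc n) \<le> pp s a b (Suc (Suc n))"
  by (simp add: pp2)

lemma pp_mono: "n \<le> n' \<Longrightarrow> pp s a b (Suc n) \<le> pp s a b (Suc n')"
proof (induction n' rule: dec_induct)
  case base then show ?case by simp
next
  case (step n') then show ?case using pp_mono1[of n'] by simp
qed

lemma lam_top: "j < s (Suc (Suc n)) \<Longrightarrow> lam s a b n j + qq s a b (Suc n) \<le> pp s a b (Suc (Suc n))"
proof -
  assume j: "j < s (Suc (Suc n))"
  then have "Suc j * qq s a b (Suc n) \<le> s (Suc (Suc n)) * qq s a b (Suc n)"
    by (intro mult_le_mono1) simp
  then show ?thesis by (simp add: lam_def pp2)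
qed

lemma lam_ge: "pp s a b (Suc n) \<le> lam s a b n j" by (simp add: lam_def)

lemma lam_lt: "j' < j \<Longrightarrow> lam s a b n j' + qq s a b (Suc n) \<le> lam s a b n j"
proof -
  assume "j' < j"
  then have "Suc j' * qq s a b (Suc n) \<le> j * qq s a b (Suc n)" by (intro mult_le_mono1) simp
  then show ?thesis by (simp add: lam_def)
qed

lemma lam_mono_j: "j' \<le> j \<Longrightarrow> lam s a b n j' \<le> lam s a b n j"
  by (simp add: lam_def)

lemma O1: "n' < n \<Longrightarrow> j' < s (Suc (Suc n')) \<Longrightarrow> lam s a b n' j' + qq s a b (Suc n') \<le> pp s a b (Suc n)"
  using lam_top[of j' n'] pp_mono[of "Suc n'" n] by simp

lemma O2: "n' + 2 \<le> n \<Longrightarrow> j' < s (Suc (Suc n')) \<Longrightarrow> lam s a b n' j' + 2 \<le> qq s a b n"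
proof -
  assume n: "n' + 2 \<le> n" and j: "j' < s (Suc (Suc n'))"
  have "Suc j' * qq s a b (Suc n') \<le> s (Suc (Suc n')) * qq s a b (Suc n')"
    using j by (intro mult_le_mono1) simp
  then have "lam s a b n' j' + 2 \<le> qq s a b (Suc (Suc n'))"
    using pp_qq[of s a b n'] by (simp add: lam_def qq2)
  also have "\<dots> \<le> qq s a b n" using n by (intro qq_mono) simp
  finally show ?thesis .
qed

lemma O3: "n < n' \<Longrightarrow> pp s a b (Suc (Suc n)) \<le> lam s a b n' j'"
  using pp_mono[of "Suc n" n'] lam_ge[of n' j'] by simp

end

definition pre :: "(nat \<Rightarrow> 'a) \<Rightarrow> 'a list \<Rightarrow> bool" where
  "pre w l \<longleftrightarrow> (\<forall>i<length l. w i = l ! i)"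

lemma pre_app1: "pre w (u @ v) \<Longrightarrow> pre w u"
  unfolding pre_def by (auto simp: nth_append)

lemma pre_pal: "pre w l \<Longrightarrow> rev l = l \<Longrightarrow> pal_prefix w (length l)"
  unfolding pre_def pal_prefix_def
proof (intro allI impI)
  fix i assume H: "\<forall>i<length l. w i = l ! i" "rev l = l" and i: "i < length l"
  have "w i = l ! i" using H i by blast
  also have "\<dots> = rev l ! i" using H by simp
  also have "\<dots> = l ! (length l - 1 - i)" using i by (simp add: rev_nth)
  also have "\<dots> = w (length l - 1 - i)"
  proof -
    have "length l - 1 - i < length l" using i by linarith
    then show ?thesis using H(1) by simp
  qed
  finally show "w i = w (length l - 1 - i)" .
qed

declare sigma.simps[simp del]

lemma pal_suffix_prefix: "rev (u @ v) = u @ v \<Longrightarrow> rev v = v \<Longrightarrow> u @ v = v @ rev u"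
  by (metis rev_append)

lemma pw_Suc_split: "k \<ge> 1 \<Longrightarrow> pw x k = x @ pw x (k - 1)"
  by (cases k) auto

lemma pw_split: "j \<le> k \<Longrightarrow> pw x k = pw x (k - j) @ pw x j"
proof -
  assume "j \<le> k"
  then have "k = (k - j) + j" by simp
  then have "pw x k = pw x ((k - j) + j)" by simp
  also have "\<dots> = pw x (k - j) @ pw x j" by (simp add: replicate_add)
  finally show ?thesis .
qed

lemma pal_pw: "rev (pw (sigma s a b (Suc n)) j @ pis s a b (Suc n)) = pw (sigma s a b (Suc n)) j @ pis s a b (Suc n)"
  using sig_inv[of s a b n] inv_step[of "pis s a b (Suc n)" "sigma s a b (Suc n)" "sigma s a b n"
        "alph a b (Suc n)" "alph a b n" j] by blast

lemma last_sig: "sigma s a b (Suc n) \<noteq> [] \<Longrightarrow> last (sigma s a b (Suc n)) = alph a b (Suc n)"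
proof -
  assume ne: "sigma s a b (Suc n) \<noteq> []"
  have "last (sigma s a b n @ sigma s a b (Suc n)) = last (pis s a b (Suc n) @ [alph a b n, alph a b (Suc n)])"
    using sig_inv[of s a b n] by metis
  then show ?thesis using ne by simp
qed

context
  fixes s :: "nat \<Rightarrow> nat" and a b :: 'a and w :: "nat \<Rightarrow> 'a"
  assumes hs: "\<forall>k\<ge>1. s k > 0"
    and hw: "\<forall>n\<ge>1. \<forall>i<length (sigma s a b n). w i = sigma s a b n ! i"
    and ab: "a \<noteq> b"
begin

lemma s_pos': "k \<ge> 1 \<Longrightarrow> s k > 0" using hs by blast

lemma qpos: "qq s a b m \<ge> 1" using qq_pos[OF hs, of a b] .
lemma qmono: "m \<le> m' \<Longrightarrow> qq s a b m \<le> qq s a b m'" using qq_mono[OF hs, of m m' a b] .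
lemma lamtop: "j < s (Suc (Suc n)) \<Longrightarrow> lam s a b n j + qq s a b (Suc n) \<le> pp s a b (Suc (Suc n))"
  using lam_top[OF hs, of j n a b] .
lemma lamlt: "j' < j \<Longrightarrow> lam s a b n j' + qq s a b (Suc n) \<le> lam s a b n j"
  using lam_lt[OF hs, of j' j a b n] .
lemma lammono: "j' \<le> j \<Longrightarrow> lam s a b n j' \<le> lam s a b n j"
  by (simp add: lam_def)
lemma lamge: "pp s a b (Suc n) \<le> lam s a b n j" using lam_ge[OF hs, of a b n j] .
lemma ppqq: "pp s a b (Suc n) + 2 = qq s a b (Suc n) + qq s a b n" using pp_qq[of s a b n] .
lemma OO1: "n' < n \<Longrightarrow> j' < s (Suc (Suc n')) \<Longrightarrow> lam s a b n' j' + qq s a b (Suc n') \<le> pp s a b (Suc n)"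
  using O1[OF hs, of n' n j' a b] .
lemma OO2: "n' + 2 \<le> n \<Longrightarrow> j' < s (Suc (Suc n')) \<Longrightarrow> lam s a b n' j' + 2 \<le> qq s a b n"
  using O2[OF hs, of n' n j' a b] .
lemma OO3: "n < n' \<Longrightarrow> pp s a b (Suc (Suc n)) \<le> lam s a b n' j'"
  using O3[OF hs, of n n' a b j'] .
lemma lamlen: "length (pw (sigma s a b (Suc n)) j @ pis s a b (Suc n)) = lam s a b n j"
  by (rule lam_len)

lemma sig_ne: "sigma s a b n \<noteq> []"
  using qpos[of n] by (auto simp: qq_def)

lemma pre_sig: "n \<ge> 1 \<Longrightarrow> pre w (sigma s a b n)"
  using hw unfolding pre_def by blast

lemma sig_prefix: "\<exists>z. sigma s a b (Suc (Suc n)) = sigma s a b (Suc n) @ z"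
proof -
  have "s (Suc (Suc n)) \<ge> 1" using s_pos'[of "Suc (Suc n)"] by simp
  then show ?thesis by (simp add: pw_Suc_split sigma.simps)
qed

lemma sig_prefix2: "\<exists>z. sigma s a b (Suc (Suc (Suc n))) = sigma s a b (Suc (Suc n)) @ sigma s a b (Suc n) @ z"
proof -
  let ?k = "s (Suc (Suc (Suc n)))"
  have k: "?k \<ge> 1" using s_pos'[of "Suc (Suc (Suc n))"] by simp
  have e: "sigma s a b (Suc (Suc (Suc n))) = sigma s a b (Suc (Suc n)) @ pw (sigma s a b (Suc (Suc n))) (?k - 1) @ sigma s a b (Suc n)"
    using k by (simp add: pw_Suc_split sigma.simps(3)[of s a b "Suc n"])
  show ?thesis
  proof (cases "?k - 1")
    case 0 then show ?thesis using e by simp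
  next
    case (Suc k')
    obtain z where z: "sigma s a b (Suc (Suc n)) = sigma s a b (Suc n) @ z" using sig_prefix by blast
    have "sigma s a b (Suc (Suc (Suc n))) = sigma s a b (Suc (Suc n)) @ sigma s a b (Suc n) @ (z @ pw (sigma s a b (Suc (Suc n))) k' @ sigma s a b (Suc n))"
      using e Suc by (subst (asm) z) (simp add: z)
    then show ?thesis by blast
  qed
qed

lemma pre_pis: "pre w (pis s a b (Suc n))"
proof (cases n)
  case 0
  have "pre w (sigma s a b (Suc 0))" using pre_sig by simp
  then have "pre w (replicate (s 1 - 1) a @ [b])" by (simp add: sigma.simps)
  then show ?thesis using 0 by (simp add: pre_app1)
next
  case (Suc m)
  obtain z where z: "sigma s a b (Suc (Suc (Suc m))) = sigma s a b (Suc (Suc m)) @ sigma s a b (Suc m) @ z"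
    using sig_prefix2 by blast
  have "pre w (sigma s a b (Suc (Suc (Suc m))))" using pre_sig by simp
  then have "pre w ((sigma s a b (Suc (Suc m)) @ sigma s a b (Suc m)) @ z)" using z by simp
  then have "pre w (sigma s a b (Suc (Suc m)) @ sigma s a b (Suc m))" by (rule pre_app1)
  then have "pre w (pis s a b (Suc (Suc m)) @ [alph a b (Suc (Suc m)), alph a b (Suc m)])"
    using sig_inv[of s a b "Suc m"] by metis
  then show ?thesis using Suc by (metis pre_app1)
qed

lemma pre_lam: "j \<le> s (Suc (Suc n)) \<Longrightarrow> pre w (pw (sigma s a b (Suc n)) j @ pis s a b (Suc n))"
proof -
  assume j: "j \<le> s (Suc (Suc n))"
  let ?x = "sigma s a b (Suc n)" and ?k = "s (Suc (Suc n))"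
  have "pis s a b (Suc (Suc n)) = pw ?x ?k @ pis s a b (Suc n)" by (simp add: pis.simps)
  also have "\<dots> = pw ?x (?k - j) @ (pw ?x j @ pis s a b (Suc n))" using pw_split[OF j] by simp
  finally have e: "pis s a b (Suc (Suc n)) = pw ?x (?k - j) @ (pw ?x j @ pis s a b (Suc n))" .
  have p1: "rev (pis s a b (Suc (Suc n))) = pis s a b (Suc (Suc n))" using sig_inv[of s a b "Suc n"] by blast
  have "pis s a b (Suc (Suc n)) = (pw ?x j @ pis s a b (Suc n)) @ rev (pw ?x (?k - j))"
    using pal_suffix_prefix[of "pw ?x (?k - j)" "pw ?x j @ pis s a b (Suc n)"] e p1 pal_pw by metis
  then show ?thesis using pre_pis[of "Suc n"] by (metis pre_app1)
qed

lemma lam_pal: "j \<le> s (Suc (Suc n)) \<Longrightarrow> lam s a b n j \<in> pal_lengths w"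
proof -
  assume j: "j \<le> s (Suc (Suc n))"
  have "pal_prefix w (length (pw (sigma s a b (Suc n)) j @ pis s a b (Suc n)))"
    using pre_pal[OF pre_lam[OF j] pal_pw] .
  then show ?thesis unfolding lamlen pal_lengths_def by simp
qed

lemma lam_letter: "j < s (Suc (Suc n)) \<Longrightarrow> w (lam s a b n j) = alph a b (Suc n)"
proof -
  assume j: "j < s (Suc (Suc n))"
  let ?x = "sigma s a b (Suc n)"
  let ?u = "pw ?x j @ pis s a b (Suc n)"
  let ?u' = "pw ?x (Suc j) @ pis s a b (Suc n)"
  have pu': "pre w ?u'" using pre_lam[of "Suc j"] j by simp
  have ru: "rev ?u = ?u" by (rule pal_pw)
  have ru': "rev ?u' = ?u'" by (rule pal_pw)
  have "?u' = ?x @ ?u" by simp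
  then have "?u' = rev ?u @ rev ?x" using ru' by (metis rev_append)
  then have e: "?u' = ?u @ rev ?x" using ru by simp
  have ne: "?x \<noteq> []" by (rule sig_ne)
  have "w (length ?u) = ?u' ! length ?u" using pu' e ne unfolding pre_def by auto
  also have "\<dots> = rev ?x ! 0" using e by (simp add: nth_append)
  also have "\<dots> = last ?x" using ne by (simp add: rev_nth last_conv_nth)
  also have "\<dots> = alph a b (Suc n)" using last_sig[OF ne] .
  finally show ?thesis using lamlen by metis
qed

lemma init_letter: "i + 1 < s 1 \<Longrightarrow> w i = a"
proof -
  assume i: "i + 1 < s 1"
  have "pre w (sigma s a b (Suc 0))" using pre_sig by simp
  then have "pre w (replicate (s 1 - 1) a @ [b])" by (simp add: sigma.simps)
  then show ?thesis using i unfolding pre_def by (auto simp: nth_append)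
qed

lemma init_pal: "i + 1 < s 1 \<Longrightarrow> i \<in> pal_lengths w"
  unfolding pal_lengths_def pal_prefix_def
proof (safe)
  fix k assume i: "i + 1 < s 1" and k: "k < i"
  have "w k = a" using i k by (intro init_letter) simp
  moreover have "w (i - 1 - k) = a" using i k by (intro init_letter) simp
  ultimately show "w k = w (i - 1 - k)" by simp
qed

lemma alph_ne: "alph a b (Suc n) \<noteq> alph a b n"
  using ab by (simp add: alph_def)

lemma pp1: "pp s a b (Suc 0) = s 1 - 1" by (simp add: pp_def)

definition Cset :: "nat set" where
  "Cset = {i. i + 1 < s 1} \<union> {lam s a b n j | n j. j < s (Suc (Suc n))}"

lemma C_sub: "Cset \<subseteq> pal_lengths w"
  unfolding Cset_def using init_pal lam_pal by fastforce

lemma C0: "0 \<in> Cset"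
proof (cases "1 < s 1")
  case True then show ?thesis unfolding Cset_def by simp
next
  case False
  then have "s 1 = 1" using s_pos'[of 1] by simp
  then have "0 = lam s a b 0 0" by (simp add: lam_def pp1)
  moreover have "0 < s (Suc (Suc 0))" using s_pos'[of "Suc (Suc 0)"] by simp
  ultimately show ?thesis unfolding Cset_def by (intro UnI2 CollectI exI[of _ 0] conjI)
qed

lemma lam_next_in: "j < s (Suc (Suc n)) \<Longrightarrow> lam s a b n j + qq s a b (Suc n) \<in> Cset"
proof -
  assume j: "j < s (Suc (Suc n))"
  show ?thesis
  proof (cases "Suc j < s (Suc (Suc n))")
    case True
    have "lam s a b n j + qq s a b (Suc n) = lam s a b n (Suc j)" by (simp add: lam_def)
    then show ?thesis using True unfolding Cset_def by blast
  next
    case False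
    then have "Suc j = s (Suc (Suc n))" using j by simp
    then have "s (Suc (Suc n)) * qq s a b (Suc n) = j * qq s a b (Suc n) + qq s a b (Suc n)"
      by (simp flip: \<open>Suc j = s (Suc (Suc n))\<close>)
    then have "lam s a b n j + qq s a b (Suc n) = lam s a b (Suc n) 0"
      by (simp add: lam_def pp2)
    moreover have "0 < s (Suc (Suc (Suc n)))" using s_pos' by simp
    ultimately show ?thesis unfolding Cset_def by blast
  qed
qed

lemma lam_good: "j < s (Suc (Suc n)) \<Longrightarrow> goodp w Cset (lam s a b n j) (lam s a b n j + qq s a b (Suc n))"
proof -
  assume j: "j < s (Suc (Suc n))"
  let ?P = "lam s a b n j" and ?q = "qq s a b (Suc n)"
  have qpos1: "?q \<ge> 1" by (rule qpos)
  have Pge: "pp s a b (Suc n) \<le> ?P" by (rule lamge)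
  have ppq: "pp s a b (Suc n) + 2 = ?q + qq s a b n" by (rule ppqq)
  have qn: "qq s a b n \<ge> 1" by (rule qpos)
  have wP: "w ?P = alph a b (Suc n)" using lam_letter[OF j] .
  have Q: "w Q \<noteq> w ?P" if QC: "Q \<in> Cset" and Q1: "2 * ?P < Q + (?P + ?q)" and Q2: "Q < ?P" for Q
  proof -
    from QC consider (init) "Q + 1 < s 1" | (lam) n' j' where "Q = lam s a b n' j'" "j' < s (Suc (Suc n'))"
      unfolding Cset_def by blast
    then show ?thesis
    proof cases
      case init
      show ?thesis
      proof (cases n)
        case 0
        then show ?thesis using init_letter[OF init] wP ab by (simp add: alph_def)
      next
        case (Suc n0)
        have "qq s a b (Suc 0) \<le> qq s a b n" using Suc by (intro qmono) simp
        then have "Q + 2 \<le> qq s a b n" using init s_pos'[of 1] qq1[of s a b] by simp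
        then show ?thesis using Q1 Pge ppq by linarith
      qed
    next
      case lam
      have wQ: "w Q = alph a b (Suc n')" using lam lam_letter by simp
      consider "n' = n" | "n < n'" | "n' < n" by linarith
      then show ?thesis
      proof cases
        case 1
        show ?thesis
        proof (cases "j' < j")
          case True
          then have "Q + ?q \<le> ?P" using lam 1 lamlt by blast
          then show ?thesis using Q1 by linarith
        next
          case False
          then have "?P \<le> Q" using lam 1 lammono by simp
          then show ?thesis using Q2 by linarith
        qed
      next
        case 2
        have "pp s a b (Suc (Suc n)) \<le> Q" using lam 2 OO3 by blast
        moreover have "?P + ?q \<le> pp s a b (Suc (Suc n))" using lamtop[OF j] .
        ultimately show ?thesis using Q2 by linarith
      next
        case 3
        have o1: "Q + qq s a b (Suc n') \<le> pp s a b (Suc n)" using OO1[OF 3 lam(2)] lam(1) by simp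
        have qn': "qq s a b (Suc n') \<ge> 1" by (rule qpos)
        show ?thesis
        proof (cases j)
          case (Suc j0)
          have "lam s a b n 0 + ?q \<le> ?P" using Suc lamlt[of 0 j n] by simp
          moreover have "lam s a b n 0 = pp s a b (Suc n)" by (simp add: lam_def)
          ultimately show ?thesis using o1 qn' Q1 by linarith
        next
          case 0
          have P0: "?P = pp s a b (Suc n)" using 0 by (simp add: lam_def)
          show ?thesis
          proof (cases "n' + 2 \<le> n")
            case True
            have "Q + 2 \<le> qq s a b n" using OO2[OF True lam(2)] lam(1) by simp
            then show ?thesis using Q1 P0 ppq by linarith
          next
            case False
            then have "n = Suc n'" using 3 by simp
            then show ?thesis using wQ wP alph_ne[of "Suc n'"] by simp
          qed
        qed
      qed
    qed
  qed
  have "?q \<le> ?P + 1" using Pge ppq qn by linarith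
  then show ?thesis unfolding goodp_def using qpos1 Q by auto
qed

lemma all_good: "\<forall>P\<in>Cset. \<exists>P'\<in>Cset. goodp w Cset P P'"
proof
  fix P assume "P \<in> Cset"
  then consider (init) "P + 1 < s 1" | (lam) n j where "P = lam s a b n j" "j < s (Suc (Suc n))"
    unfolding Cset_def by blast
  then show "\<exists>P'\<in>Cset. goodp w Cset P P'"
  proof cases
    case init
    have "P + 1 \<in> Cset"
    proof (cases "P + 2 < s 1")
      case True then show ?thesis unfolding Cset_def by simp
    next
      case False
      then have "P + 1 = lam s a b 0 0" using init by (simp add: lam_def pp1)
      moreover have "0 < s (Suc (Suc 0))" using s_pos'[of "Suc (Suc 0)"] by simp
      ultimately show ?thesis unfolding Cset_def by blast
    qed
    moreover have "goodp w Cset P (P + 1)" unfolding goodp_def by auto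
    ultimately show ?thesis by blast
  next
    case lam
    then show ?thesis using lam_next_in lam_good by blast
  qed
qed

theorem sturm_char:
  "pal_lengths w = Cset \<and>
   (\<forall>n j N. j < s (Suc (Suc n)) \<longrightarrow> lam s a b n j < N \<longrightarrow> N < lam s a b n j + qq s a b (Suc n)
      \<longrightarrow> N \<notin> pal_lengths w)"
proof -
  note H = pal_char[OF C_sub C0 all_good]
  show ?thesis
  proof
    show "pal_lengths w = Cset" using H by blast
    show "\<forall>n j N. j < s (Suc (Suc n)) \<longrightarrow> lam s a b n j < N \<longrightarrow> N < lam s a b n j + qq s a b (Suc n)
      \<longrightarrow> N \<notin> pal_lengths w"
    proof (intro allI impI)
      fix n j N assume "j < s (Suc (Suc n))" "lam s a b n j < N" "N < lam s a b n j + qq s a b (Suc n)"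
      then show "N \<notin> pal_lengths w"
        using H lam_good[of j n] Cset_def by blast
    qed
  qed
qed

end

lemma step_real:
  fixes A B C D \<rho> e :: real
  assumes A: "A \<ge> 0" and B: "B > 0" and C: "C \<ge> B + A" and D: "D \<le> 2 * C + B" "D \<ge> 0"
    and r: "2 * \<rho>^2 + 2 * \<rho> = 1" "\<rho> \<ge> 1/3" "\<rho> \<le> 1/2" and e: "e \<ge> 0"
    and h: "(\<rho> - e) * B \<le> A"
  shows "(\<rho> - e / 9) * D \<le> C"
proof -
  have id: "B + A - \<rho> * (3 * B + 2 * A) = (1 - 2 * \<rho>) * (A - \<rho> * B)"
  proof -
    have "B + A - \<rho> * (3 * B + 2 * A) - (1 - 2 * \<rho>) * (A - \<rho> * B) = B * (1 - (2 * \<rho>^2 + 2 * \<rho>))"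
      by (simp add: algebra_simps power2_eq_square)
    then show ?thesis using r(1) by simp
  qed
  have "(1 - 2 * \<rho>) * (A - \<rho> * B) \<ge> (1 - 2 * \<rho>) * (- e * B)"
    using h r(3) by (intro mult_left_mono) (auto simp: algebra_simps)
  moreover have "(e / 9) * (3 * B + 2 * A) \<ge> (1 - 2 * \<rho>) * (e * B)"
  proof -
    have "(1 - 2 * \<rho>) * (e * B) \<le> (1/3) * (e * B)"
      using r(2) e B by (intro mult_right_mono) auto
    also have "\<dots> \<le> (e / 9) * (3 * B + 2 * A)" using e A by (simp add: algebra_simps)
    finally show ?thesis .
  qed
  ultimately have k1: "(\<rho> - e / 9) * (3 * B + 2 * A) \<le> B + A"
    using id by (simp add: algebra_simps)
  have k2: "D * (B + A) \<le> C * (3 * B + 2 * A)"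
  proof -
    have "D * (B + A) \<le> (2 * C + B) * (B + A)" using D A B by (intro mult_right_mono) auto
    also have "\<dots> \<le> C * (3 * B + 2 * A)"
    proof -
      have "B * (B + A) \<le> B * C" using C B by (intro mult_left_mono) auto
      then show ?thesis by (simp add: algebra_simps)
    qed
    finally show ?thesis .
  qed
  have "(\<rho> - e / 9) * D * (3 * B + 2 * A) \<le> (B + A) * D"
    using mult_right_mono[OF k1 D(2)] by (simp add: algebra_simps)
  also have "\<dots> \<le> C * (3 * B + 2 * A)" using k2 by (simp add: algebra_simps)
  finally have "(\<rho> - e / 9) * D * (3 * B + 2 * A) \<le> C * (3 * B + 2 * A)" .
  moreover have "3 * B + 2 * A > 0" using A B by simp
  ultimately show ?thesis by simp
qed

lemma final_real:
  fixes X Y c \<epsilon> \<delta> \<rho> :: real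
  assumes "c * (1 + \<rho>) = 1 + \<epsilon> * (1 + \<rho>)" "\<rho> \<ge> 0" "\<epsilon> > 0" "c > 0" "c * \<delta> = \<epsilon> / 2"
    "X \<ge> (\<rho> - \<delta>) * Y" "\<epsilon> * Y \<ge> 4 * c" "Y \<ge> 0"
  shows "Y \<le> c * (Y + X - 2)"
proof -
  have "c * (Y + (\<rho> - \<delta>) * Y - 2) \<le> c * (Y + X - 2)"
    using assms by (intro mult_left_mono) auto
  moreover have "c * (Y + (\<rho> - \<delta>) * Y - 2) = Y * (c * (1 + \<rho>)) - (c * \<delta>) * Y - 2 * c"
    by (simp add: algebra_simps)
  moreover have "Y * (c * (1 + \<rho>)) = Y + (\<epsilon> * (1 + \<rho>)) * Y" using assms(1) by (simp add: algebra_simps)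
  moreover have "(c * \<delta>) * Y = (\<epsilon> * Y) / 2" using assms(5) by simp
  moreover have "(\<epsilon> * (1 + \<rho>)) * Y \<ge> \<epsilon> * Y"
  proof -
    have "\<epsilon> * Y \<le> \<epsilon> * Y + \<epsilon> * \<rho> * Y" using assms by simp
    then show ?thesis by (simp add: algebra_simps)
  qed
  ultimately show ?thesis using assms(7) by linarith
qed


lemma sqrt13_facts: "sqrt 13 > 3" "((sqrt 13 - 3) / 2)^2 + 3 * ((sqrt 13 - 3) / 2) = 1"
  "((7 + sqrt 13) / 6 - 1) * (1 + (sqrt 13 - 3) / 2) = 1"
proof -
  have s: "sqrt 13 ^ 2 = 13" by simp
  show "sqrt 13 > 3" by (rule real_less_rsqrt) simp
  show "((sqrt 13 - 3) / 2)^2 + 3 * ((sqrt 13 - 3) / 2) = 1"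
    using s by (simp add: power2_eq_square field_simps)
  show "((7 + sqrt 13) / 6 - 1) * (1 + (sqrt 13 - 3) / 2) = 1"
    using s by (simp add: power2_eq_square field_simps)
qed

lemma sqrt3_facts: "2 * ((sqrt 3 - 1) / 2)^2 + 2 * ((sqrt 3 - 1) / 2) = 1"
  "(sqrt 3 - 1) / 2 \<ge> 1/3" "(sqrt 3 - 1) / 2 \<le> 1/2" "(sqrt 3 - 1) * (1 + (sqrt 3 - 1) / 2) = 1"
  "sqrt 3 > 1"
proof -
  have s: "sqrt 3 ^ 2 = 3" by simp
  show "2 * ((sqrt 3 - 1) / 2)^2 + 2 * ((sqrt 3 - 1) / 2) = 1"
    using s by (simp add: power2_eq_square field_simps)
  have "5/3 \<le> sqrt 3" by (rule real_le_rsqrt) (simp add: power2_eq_square)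
  then show "(sqrt 3 - 1) / 2 \<ge> 1/3" by simp
  have "sqrt 3 \<le> 2" by (rule real_sqrt_le_iff[THEN iffD2, of 3 4, simplified])
  then show "(sqrt 3 - 1) / 2 \<le> 1/2" by simp
  show "(sqrt 3 - 1) * (1 + (sqrt 3 - 1) / 2) = 1"
    using s by (simp add: power2_eq_square field_simps)
  show "sqrt 3 > 1" by simp
qed

context
  fixes s :: "nat \<Rightarrow> nat" and a b :: 'a and w :: "nat \<Rightarrow> 'a"
  assumes hs: "\<forall>k\<ge>1. s k > 0"
    and hw: "\<forall>n\<ge>1. \<forall>i<length (sigma s a b n). w i = sigma s a b n ! i"
    and ab: "a \<noteq> b"
begin

lemma qp: "qq s a b m \<ge> 1" using qq_pos[OF hs, of a b m] .
lemma qg: "m \<le> qq s a b m" using qq_ge[OF hs, of m a b] .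
lemma q2: "qq s a b (Suc (Suc n)) = s (Suc (Suc n)) * qq s a b (Suc n) + qq s a b n"
  by (rule qq2)
lemma pq: "pp s a b (Suc n) + 2 = qq s a b (Suc n) + qq s a b n" by (rule pp_qq)
lemma SC: "pal_lengths w = Cset s a b" using sturm_char[OF hs hw ab] by blast
lemma gapS: "j < s (Suc (Suc n)) \<Longrightarrow> lam s a b n j < N \<Longrightarrow> N < lam s a b n j + qq s a b (Suc n)
      \<Longrightarrow> N \<notin> pal_lengths w"
  using sturm_char[OF hs hw ab] by blast
lemma lpal: "j \<le> s (Suc (Suc n)) \<Longrightarrow> lam s a b n j \<in> pal_lengths w"
  using lam_pal[OF hs hw ab] by blast
lemma spos: "k \<ge> 1 \<Longrightarrow> s k > 0" using hs by blast

lemma case1: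
  assumes inf: "infinite (pal_lengths w)" and freq: "\<forall>M. \<exists>m\<ge>M. s m \<ge> 3"
  shows "ereal ((7 + sqrt 13) / 6) \<le> delta w"
  unfolding delta_def
proof (rule delta_lower[OF inf], intro allI)
  fix N
  define r where "r = (sqrt 13 - 3) / 2"
  define B where "B = (7 + sqrt 13) / 6"
  have r0: "r > 0" using sqrt13_facts(1) unfolding r_def by simp
  have r1: "r^2 + 3 * r = 1" using sqrt13_facts(2) unfolding r_def .
  have Br: "(B - 1) * (1 + r) = 1" using sqrt13_facts(3) unfolding r_def B_def .
  have B1: "B - 1 > 0" using sqrt13_facts(1) unfolding B_def by simp
  obtain m where m: "m \<ge> N + 3" "s m \<ge> 3" using freq by blast
  define k where "k = m - 2"
  have k: "m = Suc (Suc k)" using m(1) unfolding k_def by simp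
  have kN: "k \<ge> N + 1" using m k by simp
  have "\<exists>n. k \<le> n \<and> real (qq s a b n) \<le> r * real (qq s a b (Suc n))"
  proof (cases "real (qq s a b (Suc k)) \<le> r * real (qq s a b (Suc (Suc k)))")
    case True then show ?thesis by (intro exI[of _ "Suc k"]) simp
  next
    case False
    let ?A = "real (qq s a b k)" and ?B = "real (qq s a b (Suc k))" and ?C = "real (qq s a b (Suc (Suc k)))"
    have "s (Suc (Suc k)) * qq s a b (Suc k) \<ge> 3 * qq s a b (Suc k)"
      using m k by (intro mult_right_mono) auto
    then have "3 * qq s a b (Suc k) + qq s a b k \<le> qq s a b (Suc (Suc k))" using q2[of k] by linarith
    then have "real (3 * qq s a b (Suc k) + qq s a b k) \<le> ?C" by (simp only: of_nat_le_iff)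
    then have C: "?C \<ge> 3 * ?B + ?A" by simp
    have "r * ?A \<le> r * (?C - 3 * ?B)" using C r0 by (intro mult_left_mono) auto
    also have "\<dots> < ?B - 3 * r * ?B" using False by (simp add: algebra_simps)
    also have "\<dots> = (1 - 3 * r) * ?B" by (simp add: algebra_simps)
    also have "1 - 3 * r = r^2" using r1 by linarith
    also have "r^2 * ?B = r * (r * ?B)" by (simp add: power2_eq_square)
    finally have "r * ?A < r * (r * ?B)" .
    then have "?A < r * ?B" using r0 by simp
    then show ?thesis by (intro exI[of _ k]) simp
  qed
  then obtain n where n: "k \<le> n" "real (qq s a b n) \<le> r * real (qq s a b (Suc n))" by blast
  let ?P = "pp s a b (Suc n)" and ?Y = "qq s a b (Suc n)" and ?X = "qq s a b n"
  have P0: "lam s a b n 0 = ?P" by (simp add: lam_def)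
  have P1: "lam s a b n 1 = ?P + ?Y" by (simp add: lam_def)
  have s2: "s (Suc (Suc n)) \<ge> 1" using spos[of "Suc (Suc n)"] by simp
  have PS: "?P \<in> pal_lengths w" using lpal[of 0 n] P0 by simp
  have P'S: "?P + ?Y \<in> pal_lengths w" using lpal[of 1 n] P1 s2 by simp
  have pq': "?P + 2 = ?Y + ?X" by (rule pq)
  have "Suc n \<le> ?Y" by (rule qg)
  moreover have "1 \<le> ?X" by (rule qp)
  ultimately have Pge: "n \<le> ?P" using pq' by linarith
  have "1 \<le> n" using kN n by simp
  then have Ppos: "0 < ?P" using Pge by simp
  have gap: "\<forall>x\<in>pal_lengths w. \<not> (?P < x \<and> x < ?P + ?Y)"
    using gapS[of 0 n] P0 s2 by auto
  have ratio: "B * real ?P \<le> real (?P + ?Y)"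
  proof -
    have e: "real ?P + 2 = real ?Y + real ?X" using pq' by (metis of_nat_add of_nat_numeral)
    have "(B - 1) * real ?P \<le> (B - 1) * ((1 + r) * real ?Y)"
      using e n(2) B1 by (intro mult_left_mono) (auto simp: algebra_simps)
    also have "\<dots> = ((B - 1) * (1 + r)) * real ?Y" by (simp add: algebra_simps)
    also have "\<dots> = real ?Y" using Br by simp
    finally show ?thesis by (simp add: algebra_simps)
  qed
  show "\<exists>n n'. n \<in> pal_lengths w \<and> n' \<in> pal_lengths w \<and> N \<le> n \<and> 0 < n \<and> n < n' \<and>
      (\<forall>x\<in>pal_lengths w. \<not> (n < x \<and> x < n')) \<and>
      (7 + sqrt 13) / 6 * real n \<le> real n'"
  proof -
    have lt: "?P < ?P + ?Y" using qp[of "Suc n"] by simp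
    have NP: "N \<le> ?P" using Pge kN n(1) by linarith
    have ratio': "(7 + sqrt 13) / 6 * real ?P \<le> real (?P + ?Y)" using ratio unfolding B_def .
    show ?thesis using PS P'S NP Ppos lt gap ratio' by blast
  qed
qed


lemma case2:
  assumes inf: "infinite (pal_lengths w)" and ev: "\<forall>m\<ge>M. s m \<le> 2"
  shows "delta w \<le> ereal (sqrt 3)"
  unfolding delta_def
proof (rule delta_upper[OF inf], intro allI impI)
  fix \<epsilon> :: real assume \<epsilon>: "0 < \<epsilon>"
  define \<rho> where "\<rho> = (sqrt 3 - 1) / 2"
  define c where "c = sqrt 3 - 1 + \<epsilon>"
  define \<delta> where "\<delta> = \<epsilon> / (2 * c)"
  define e where "e j = 3 * (1/3::real)^j" for j
  have r1: "2 * \<rho>^2 + 2 * \<rho> = 1" "\<rho> \<ge> 1/3" "\<rho> \<le> 1/2"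
    using sqrt3_facts(1,2,3) unfolding \<rho>_def by auto
  have c0: "c > 0" using sqrt3_facts(5) \<epsilon> unfolding c_def by linarith
  have c1: "c * (1 + \<rho>) = 1 + \<epsilon> * (1 + \<rho>)"
  proof -
    have "c * (1 + \<rho>) = (sqrt 3 - 1) * (1 + \<rho>) + \<epsilon> * (1 + \<rho>)" unfolding c_def by (simp add: algebra_simps)
    then show ?thesis using sqrt3_facts(4) unfolding \<rho>_def by simp
  qed
  have cd: "c * \<delta> = \<epsilon> / 2" unfolding \<delta>_def using c0 by simp
  have d0: "\<delta> > 0" unfolding \<delta>_def using c0 \<epsilon> by simp
  have e0: "e j \<ge> 0" for j unfolding e_def by simp
  have claim: "(\<rho> - e j) * real (qq s a b (M + j + 1)) \<le> real (qq s a b (M + j))" for j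
  proof (induction j rule: less_induct)
    case (less j)
    show ?case
    proof (cases "j < 2")
      case True
      then have "e j \<ge> 1" unfolding e_def by (cases j) (auto)
      then have "\<rho> - e j \<le> 0" using r1 by simp
      then have "(\<rho> - e j) * real (qq s a b (M + j + 1)) \<le> 0" by (simp add: mult_nonpos_nonneg)
      then show ?thesis by simp
    next
      case False
      define j' where "j' = j - 2"
      have jj: "j = j' + 2" using False unfolding j'_def by simp
      define k where "k = M + j'"
      have IH: "(\<rho> - e j') * real (qq s a b (Suc k)) \<le> real (qq s a b k)"
        using less.IH[of j'] jj unfolding k_def by simp
      let ?A = "qq s a b k" and ?B = "qq s a b (Suc k)" and ?C = "qq s a b (Suc (Suc k))"
        and ?D = "qq s a b (Suc (Suc (Suc k)))"
      have s2: "1 \<le> s (Suc (Suc k))" "s (Suc (Suc k)) \<le> 2" using spos[of "Suc (Suc k)"] ev unfolding k_def by auto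
      have s3: "s (Suc (Suc (Suc k))) \<le> 2" using ev unfolding k_def by auto
      have "?B \<le> s (Suc (Suc k)) * ?B" using s2 by simp
      then have "?B + ?A \<le> ?C" using q2[of k] by linarith
      then have "real (?B + ?A) \<le> real ?C" by (simp only: of_nat_le_iff)
      then have C: "real ?C \<ge> real ?B + real ?A" by simp
      have "s (Suc (Suc (Suc k))) * ?C \<le> 2 * ?C" using s3 by (intro mult_right_mono) auto
      then have "?D \<le> 2 * ?C + ?B" using q2[of "Suc k"] by linarith
      then have "real ?D \<le> real (2 * ?C + ?B)" by (simp only: of_nat_le_iff)
      then have D: "real ?D \<le> 2 * real ?C + real ?B" by simp
      have B0: "real ?B > 0" using qp[of "Suc k"] by simp
      have st: "(\<rho> - e j' / 9) * real ?D \<le> real ?C"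
        by (rule step_real[OF _ B0 C D _ r1 e0 IH]) simp_all
      have "e j' / 9 = e j" unfolding e_def jj by (simp add: power_add)
      moreover have "M + j + 1 = Suc (Suc (Suc k))" "M + j = Suc (Suc k)" unfolding k_def jj by simp_all
      ultimately show ?thesis using st by simp
    qed
  qed
  obtain j0 where j0: "(1/3::real)^j0 < \<delta> / 3" using real_arch_pow_inv[of "\<delta> / 3" "1/3::real"] d0 by auto
  have ej: "e j \<le> \<delta>" if "j \<ge> j0" for j
  proof -
    have "(1/3::real)^j \<le> (1/3)^j0" using that by (intro power_decreasing) auto
    then show ?thesis using j0 unfolding e_def by linarith
  qed
  define K1 where "K1 = M + j0 + nat \<lceil>4 * c / \<epsilon>\<rceil> + 1"
  have keyq: "real (qq s a b (Suc n)) \<le> c * real (pp s a b (Suc n))" if nK: "n \<ge> K1" for n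
  proof -
    define j where "j = n - M"
    have jn: "M + j = n" "M + j + 1 = Suc n" using nK unfolding j_def K1_def by auto
    have jj0: "j \<ge> j0" using nK unfolding j_def K1_def by auto
    let ?X = "real (qq s a b n)" and ?Y = "real (qq s a b (Suc n))"
    have cl: "(\<rho> - e j) * ?Y \<le> ?X" using claim[of j] jn by simp
    have "(\<rho> - \<delta>) * ?Y \<le> (\<rho> - e j) * ?Y" using ej[OF jj0] by (intro mult_right_mono) auto
    then have X: "?X \<ge> (\<rho> - \<delta>) * ?Y" using cl by linarith
    have "4 * c / \<epsilon> \<le> real (nat \<lceil>4 * c / \<epsilon>\<rceil>)" by linarith
    also have "\<dots> \<le> real (Suc n)" using nK unfolding K1_def by simp
    also have "\<dots> \<le> ?Y" using qg[of "Suc n"] by simp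
    finally have "4 * c / \<epsilon> \<le> ?Y" .
    then have Y: "\<epsilon> * ?Y \<ge> 4 * c" using \<epsilon> by (simp add: divide_le_eq mult.commute)
    have fr: "?Y \<le> c * (?Y + ?X - 2)"
      by (rule final_real[OF c1 _ \<epsilon> c0 cd X Y]) (use r1 in simp_all)
    have "pp s a b (Suc n) + 2 = qq s a b (Suc n) + qq s a b n" by (rule pq)
    then have "real (pp s a b (Suc n)) = ?Y + ?X - 2" by (metis add_diff_cancel_right' of_nat_add of_nat_numeral)
    then show ?thesis using fr by simp
  qed
  define N where "N = pp s a b (Suc K1) + s 1"
  show "\<exists>N. \<forall>n\<in>pal_lengths w. N \<le> n \<longrightarrow> (\<exists>y\<in>pal_lengths w. n < y \<and> real y \<le> (sqrt 3 + \<epsilon>) * real n)"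
  proof (intro exI[of _ N] ballI impI)
    fix n assume nS: "n \<in> pal_lengths w" and nN: "N \<le> n"
    have "n \<in> Cset s a b" using nS SC by simp
    then consider (init) "n + 1 < s 1" | (lam) n0 j where "n = lam s a b n0 j" "j < s (Suc (Suc n0))"
      unfolding Cset_def[OF hs hw ab] by blast
    then show "\<exists>y\<in>pal_lengths w. n < y \<and> real y \<le> (sqrt 3 + \<epsilon>) * real n"
    proof cases
      case init then show ?thesis using nN unfolding N_def by simp
    next
      case lam
      have n0: "n0 \<ge> K1"
      proof (rule ccontr)
        assume "\<not> n0 \<ge> K1"
        then have "Suc n0 \<le> K1" by simp
        then have "pp s a b (Suc (Suc n0)) \<le> pp s a b (Suc K1)" using pp_mono[OF hs, of "Suc n0" K1 a b] by simp
        moreover have "lam s a b n0 j + qq s a b (Suc n0) \<le> pp s a b (Suc (Suc n0))"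
          using lam_top[OF hs lam(2)] .
        moreover have "qq s a b (Suc n0) \<ge> 1" by (rule qp)
        ultimately show False using nN lam(1) unfolding N_def by linarith
      qed
      let ?y = "lam s a b n0 j + qq s a b (Suc n0)"
      have yC: "?y \<in> Cset s a b" using lam_next_in[OF hs hw ab lam(2)] .
      then have yS: "?y \<in> pal_lengths w" using SC by simp
      have lt: "n < ?y" using lam(1) qp[of "Suc n0"] by simp
      have "real (qq s a b (Suc n0)) \<le> c * real (pp s a b (Suc n0))" using keyq[OF n0] .
      also have "\<dots> \<le> c * real n"
        using lam_ge[OF hs, of a b n0 j] lam(1) c0 by (intro mult_left_mono) auto
      finally have "real ?y \<le> real n + c * real n" using lam(1) by simp
      also have "\<dots> = (sqrt 3 + \<epsilon>) * real n" unfolding c_def by (simp add: algebra_simps)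
      finally show ?thesis using yS lt by blast
    qed
  qed
qed
end

lemma periodic_upper:
  fixes w :: "nat \<Rightarrow> 'a"
  assumes per: "periodic_pal w" and inf: "infinite (pal_lengths w)"
  shows "delta w \<le> ereal 1"
proof -
  obtain u where u: "u \<noteq> []" "rev u = u" "\<forall>i. w i = u ! (i mod length u)"
    using per unfolding periodic_pal_def by blast
  define p where "p = length u"
  have p0: "p > 0" using u(1) unfolding p_def by simp
  have palk: "k * p \<in> pal_lengths w" for k
    unfolding pal_lengths_def pal_prefix_def
  proof (safe)
    fix i assume i: "i < k * p"
    define q where "q = i div p"
    define r where "r = i mod p"
    have ir: "i = q * p + r" unfolding q_def r_def by simp
    have rp: "r < p" unfolding r_def using p0 by simp
    have "q < k"
    proof (rule ccontr)
      assume "\<not> q < k"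
      then have "k * p \<le> q * p" by (intro mult_right_mono) auto
      then show False using i ir by linarith
    qed
    then obtain t where t: "k = Suc (q + t)" by (metis less_iff_Suc_add)
    have e: "k * p - 1 - i = t * p + (p - 1 - r)"
    proof -
      have "k * p = q * p + p + t * p" using t by (simp add: algebra_simps)
      then show ?thesis using ir rp by simp
    qed
    have m: "(k * p - 1 - i) mod p = p - 1 - r"
    proof -
      have "(t * p + (p - 1 - r)) mod p = (p - 1 - r) mod p" by (metis mod_mult_self3)
      also have "\<dots> = p - 1 - r" using rp by simp
      finally show ?thesis unfolding e .
    qed
    have "w (k * p - 1 - i) = u ! (p - 1 - r)" using u(3) m unfolding p_def by simp
    also have "\<dots> = rev u ! r" using rp unfolding p_def by (simp add: rev_nth)
    also have "\<dots> = u ! r" using u(2) by simp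
    also have "\<dots> = w i" using u(3) unfolding r_def p_def by simp
    finally show "w i = w (k * p - 1 - i)" by simp
  qed
  show ?thesis
    unfolding delta_def
  proof (rule delta_upper[OF inf], intro allI impI)
    fix \<epsilon> :: real assume \<epsilon>: "0 < \<epsilon>"
    show "\<exists>N. \<forall>n\<in>pal_lengths w. N \<le> n \<longrightarrow> (\<exists>y\<in>pal_lengths w. n < y \<and> real y \<le> (1 + \<epsilon>) * real n)"
    proof (intro exI[of _ "nat \<lceil>real p / \<epsilon>\<rceil>"] ballI impI)
      fix n assume nN: "nat \<lceil>real p / \<epsilon>\<rceil> \<le> n"
      let ?y = "(n div p + 1) * p"
      have yS: "?y \<in> pal_lengths w" by (rule palk)
      have dm: "n = n div p * p + n mod p" by simp
      have "n mod p < p" using p0 by simp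
      moreover have y_eq: "?y = n div p * p + p" by (simp add: algebra_simps)
      ultimately have lt: "n < ?y" using dm by linarith
      have le: "?y \<le> n + p" using dm y_eq by linarith
      have "real p / \<epsilon> \<le> real n" using nN by linarith
      then have "real p \<le> \<epsilon> * real n" using \<epsilon> by (simp add: divide_le_eq mult.commute)
      moreover have "real ?y \<le> real (n + p)" using le by (simp only: of_nat_le_iff)
      moreover have "real (n + p) = real n + real p" by (simp only: of_nat_add)
      moreover have "(1 + \<epsilon>) * real n = real n + \<epsilon> * real n" by (simp add: algebra_simps)
      ultimately have "real ?y \<le> (1 + \<epsilon>) * real n" by linarith
      then show "\<exists>y\<in>pal_lengths w. n < y \<and> real y \<le> (1 + \<epsilon>) * real n" using yS lt by blast
    qed
  qed
qed

theorem proposition7p7: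
  shows "\<not> (\<exists>d\<in>Dprime. ereal (sqrt 3) < d \<and> d < ereal ((7 + sqrt 13) / 6))"
proof
  assume "\<exists>d\<in>Dprime. ereal (sqrt 3) < d \<and> d < ereal ((7 + sqrt 13) / 6)"
  then obtain w :: "nat \<Rightarrow> nat" where inf: "infinite (pal_lengths w)"
    and cases: "periodic_pal w \<or> char_sturmian w"
    and lo: "ereal (sqrt 3) < delta w" and hi: "delta w < ereal ((7 + sqrt 13) / 6)"
    unfolding Dprime_def by blast
  from cases show False
  proof
    assume "periodic_pal w"
    then have "delta w \<le> ereal 1" using periodic_upper inf by blast
    moreover have "ereal 1 \<le> ereal (sqrt 3)" by simp
    ultimately have "delta w \<le> ereal (sqrt 3)" by (rule order.trans)
    then show False using lo by simp
  next
    assume "char_sturmian w"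
    then obtain s and a b :: nat where ab: "a \<noteq> b" and hs: "\<forall>k\<ge>1. s k > 0"
      and hw: "\<forall>n\<ge>1. \<forall>i<length (sigma s a b n). w i = sigma s a b n ! i"
      unfolding char_sturmian_def by blast
    show False
    proof (cases "\<forall>M. \<exists>m\<ge>M. s m \<ge> 3")
      case True
      then have "ereal ((7 + sqrt 13) / 6) \<le> delta w" using case1[OF hs hw ab inf] by blast
      then show False using hi by simp
    next
      case False
      then obtain M where "\<forall>m\<ge>M. \<not> 3 \<le> s m" by blast
      then have "\<forall>m\<ge>M. s m \<le> 2" by auto
      then have "delta w \<le> ereal (sqrt 3)" using case2[OF hs hw ab inf] by blast
      then show False using lo by simp
    qed
  qed
qed

end
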